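(* In the setting of the previous statement (unitary $V$, $D=c_1I+c_2V$ with real $c_1,c_2$, unitary Arnoldi quantities $Q_k,L_k,U_k,l_{k+1,k}$, $T_k=c_1U_k+c_2L_k$ with nonsingular LU factorization, $z_k$ solving $T_kz_k=\|b\|_2e_1$, $\alpha_k=e_k^Tz_k$, and $x_k=Q_kU_kz_k$), let $\nu=c_2l_{k+1,k}$ and let $\tilde T_k$ be the $(k+1)\times k$ matrix obtained by appending the row $\nu e_k^T$ to $T_k$. Let $O_k$ be a $(k+1)\times(k+1)$ unitary matrix of the form $O_k=G_k\begin{pmatrix}O_{k-1}&0\\0&1\end{pmatrix}$ (with $O_0=1$), where $G_k$ acts as the identity on the first $k-1$ coordinates and as $\begin{pmatrix}c_k&s_k\\-\bar s_k&c_k\end{pmatrix}$ (with $c_k\ge0$ real, $c_k^2+|s_k|^2=1$) on coordinates $k,k+1$, chosen so that $O_k\tilde T_k=\begin{pmatrix}R_k\\0\end{pmatrix}$ with $R_k$ upper triangular; assume $R_k$ is nonsingular. Then the minimizer $$\tilde x_k=\arg\min_{x\in\mathrm{span}\{b,Db,\dots,D^{k-1}b\}}\|b-Dx\|_2$$ is given by $$\tilde x_k=x_k-\nu\alpha_ks_k\,Q_kU_kR_k^{-1}e_k .$$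
   Context: Unitary Arnoldi process: $q_1=b/\|b\|_2$, $q_0=0$, $v_0=0$, $u_{01}=0$; for $j=1,2,\dots$: $v_j=Vq_j$, $u_{j-1,j}=-(q_{j-1}^*v_j)/(q_{j-1}^*v_{j-1})$ for $j>1$, $l_{jj}=q_j^*v_j+u_{j-1,j}q_j^*v_{j-1}$, $\tilde q_{j+1}=v_j-l_{jj}q_j+u_{j-1,j}v_{j-1}$, $l_{j+1,j}=\|\tilde q_{j+1}\|_2$, $q_{j+1}=\tilde q_{j+1}/l_{j+1,j}$, assumed without breakdown. $Q_k=[q_1,\dots,q_k]$ (orthonormal columns); $L_k$ is $k\times k$ lower bidiagonal with diagonal $l_{jj}$ and subdiagonal $l_{j+1,j}$; $U_k$ is $k\times k$ upper bidiagonal with unit diagonal and superdiagonal $u_{j-1,j}$; $VQ_kU_k=Q_kL_k+l_{k+1,k}q_{k+1}e_k^T$. $e_j$ is the $j$-th standard unit vector. *)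

theory Defs
  imports "Jordan_Normal_Form.Schur_Decomposition" "Jordan_Normal_Form.Gauss_Jordan_Elimination"
begin

text \<open>The paper's 1-based index j of q_j is kept for the Arnoldi
vectors (ua_q V b j = q_j, with q_0 = 0); the matrix entry of the paper at
(i,j) (1-based) is stored at (i-1,j-1).\<close>

definition cinner :: "complex vec \<Rightarrow> complex vec \<Rightarrow> complex" where
  "cinner x y = (\<Sum>i<dim_vec x. cnj (x $ i) * y $ i)"

definition vnorm :: "complex vec \<Rightarrow> real" where
  "vnorm x = sqrt (\<Sum>i<dim_vec x. (cmod (x $ i))^2)"

text \<open>One step of the unitary Arnoldi process, from qp = q_{j-1}, q = q_j
(v_j = V q_j, v_{j-1} = V q_{j-1}; note V 0 = 0 = v_0).\<close>

definition ua_u :: "complex mat \<Rightarrow> complex vec \<Rightarrow> complex vec \<Rightarrow> complex" where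
  "ua_u V qp q = - (cinner qp (V *\<^sub>v q)) / (cinner qp (V *\<^sub>v qp))"

definition ua_l :: "complex mat \<Rightarrow> complex vec \<Rightarrow> complex vec \<Rightarrow> complex" where
  "ua_l V qp q = cinner q (V *\<^sub>v q) + ua_u V qp q * cinner q (V *\<^sub>v qp)"

definition ua_qt :: "complex mat \<Rightarrow> complex vec \<Rightarrow> complex vec \<Rightarrow> complex vec" where
  "ua_qt V qp q = V *\<^sub>v q - ua_l V qp q \<cdot>\<^sub>v q + ua_u V qp q \<cdot>\<^sub>v (V *\<^sub>v qp)"

fun ua_q :: "complex mat \<Rightarrow> complex vec \<Rightarrow> nat \<Rightarrow> complex vec" where
  "ua_q V b 0 = 0\<^sub>v (dim_vec b)"
| "ua_q V b (Suc 0) = complex_of_real (1 / vnorm b) \<cdot>\<^sub>v b"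
| "ua_q V b (Suc (Suc j)) =
     complex_of_real (1 / vnorm (ua_qt V (ua_q V b j) (ua_q V b (Suc j))))
       \<cdot>\<^sub>v ua_qt V (ua_q V b j) (ua_q V b (Suc j))"

text \<open>Paper-indexed scalars (j \<ge> 1):
  ua_usup V b j = u_{j-1,j}, ua_ldiag V b j = l_{jj}, ua_lsub V b j = l_{j+1,j}.\<close>

definition ua_usup :: "complex mat \<Rightarrow> complex vec \<Rightarrow> nat \<Rightarrow> complex" where
  "ua_usup V b j = ua_u V (ua_q V b (j - 1)) (ua_q V b j)"

definition ua_ldiag :: "complex mat \<Rightarrow> complex vec \<Rightarrow> nat \<Rightarrow> complex" where
  "ua_ldiag V b j = ua_l V (ua_q V b (j - 1)) (ua_q V b j)"

definition ua_lsub :: "complex mat \<Rightarrow> complex vec \<Rightarrow> nat \<Rightarrow> real" where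
  "ua_lsub V b j = vnorm (ua_qt V (ua_q V b (j - 1)) (ua_q V b j))"

text \<open>No breakdown in the first k steps: all divisions are by nonzero numbers.\<close>
definition ua_no_breakdown :: "complex mat \<Rightarrow> complex vec \<Rightarrow> nat \<Rightarrow> bool" where
  "ua_no_breakdown V b k \<longleftrightarrow> vnorm b \<noteq> 0
     \<and> (\<forall>j. 1 \<le> j \<and> j \<le> k \<longrightarrow> ua_lsub V b j \<noteq> 0)
     \<and> (\<forall>j. 2 \<le> j \<and> j \<le> k \<longrightarrow> cinner (ua_q V b (j - 1)) (V *\<^sub>v ua_q V b (j - 1)) \<noteq> 0)"

definition ua_Q :: "complex mat \<Rightarrow> complex vec \<Rightarrow> nat \<Rightarrow> complex mat" where
  "ua_Q V b k = mat (dim_vec b) k (\<lambda>(i, j). ua_q V b (j + 1) $ i)"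

definition ua_L :: "complex mat \<Rightarrow> complex vec \<Rightarrow> nat \<Rightarrow> complex mat" where
  "ua_L V b k = mat k k (\<lambda>(i, j). if i = j then ua_ldiag V b (j + 1)
      else if i = j + 1 then complex_of_real (ua_lsub V b (j + 1)) else 0)"

definition ua_U :: "complex mat \<Rightarrow> complex vec \<Rightarrow> nat \<Rightarrow> complex mat" where
  "ua_U V b k = mat k k (\<lambda>(i, j). if i = j then 1
      else if j = i + 1 then ua_usup V b (j + 1) else 0)"

definition unitary_mat :: "complex mat \<Rightarrow> bool" where
  "unitary_mat A \<longleftrightarrow> A \<in> carrier_mat (dim_row A) (dim_row A) \<and> mat_adjoint A * A = 1\<^sub>m (dim_row A)"

definition has_nonsingular_LU :: "complex mat \<Rightarrow> bool" where
  "has_nonsingular_LU T \<longleftrightarrow> (\<exists>L U. L \<in> carrier_mat (dim_row T) (dim_row T)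
     \<and> U \<in> carrier_mat (dim_row T) (dim_row T)
     \<and> (\<forall>i<dim_row T. L $$ (i, i) = 1 \<and> (\<forall>j<dim_row T. i < j \<longrightarrow> L $$ (i, j) = 0))
     \<and> upper_triangular U \<and> (\<forall>i<dim_row T. U $$ (i, i) \<noteq> 0)
     \<and> T = L * U)"

definition givens_mat :: "nat \<Rightarrow> real \<Rightarrow> complex \<Rightarrow> complex mat" where
  "givens_mat j c s = mat (j + 1) (j + 1) (\<lambda>(a, b).
     if a = j - 1 \<and> b = j - 1 then complex_of_real c
     else if a = j - 1 \<and> b = j then s
     else if a = j \<and> b = j - 1 then - cnj s
     else if a = j \<and> b = j then complex_of_real c
     else if a = b then 1 else 0)"

definition krylov :: "complex mat \<Rightarrow> complex vec \<Rightarrow> nat \<Rightarrow> complex vec set" where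
  "krylov D b k = {mat (dim_vec b) k (\<lambda>(i, j). ((D ^\<^sub>m j) *\<^sub>v b) $ i) *\<^sub>v c | c. c \<in> carrier_vec k}"

end

theory Submission
  imports Defs
begin



lemma adj_dims[simp]: "dim_row (mat_adjoint A) = dim_col A" "dim_col (mat_adjoint A) = dim_row A"
  unfolding mat_adjoint_def by auto

lemma adj_index[simp]: "i < dim_col A \<Longrightarrow> j < dim_row A \<Longrightarrow> mat_adjoint A $$ (i,j) = cnj (A $$ (j,i))"
  unfolding mat_adjoint_def by (auto simp: mat_of_rows_def conjugate_complex_def)

lemma cinner_add_left: "x \<in> carrier_vec n \<Longrightarrow> y \<in> carrier_vec n \<Longrightarrow> z \<in> carrier_vec n \<Longrightarrow>
  cinner (x + y) z = cinner x z + cinner y z"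
  unfolding cinner_def by (auto simp: sum.distrib algebra_simps)

lemma cinner_add_right: "x \<in> carrier_vec n \<Longrightarrow> y \<in> carrier_vec n \<Longrightarrow> z \<in> carrier_vec n \<Longrightarrow>
  cinner z (x + y) = cinner z x + cinner z y"
  unfolding cinner_def by (auto simp: sum.distrib algebra_simps)

lemma cinner_minus_left: "x \<in> carrier_vec n \<Longrightarrow> y \<in> carrier_vec n \<Longrightarrow> z \<in> carrier_vec n \<Longrightarrow>
  cinner (x - y) z = cinner x z - cinner y z"
  unfolding cinner_def by (auto simp: sum_subtractf algebra_simps)

lemma cinner_minus_right: "x \<in> carrier_vec n \<Longrightarrow> y \<in> carrier_vec n \<Longrightarrow> z \<in> carrier_vec n \<Longrightarrow>
  cinner z (x - y) = cinner z x - cinner z y"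
  unfolding cinner_def by (auto simp: sum_subtractf algebra_simps)

lemma cinner_smult_left: "cinner (a \<cdot>\<^sub>v x) z = cnj a * cinner x z"
  unfolding cinner_def by (auto simp: sum_distrib_left algebra_simps)

lemma cinner_smult_right: "dim_vec z = dim_vec x \<Longrightarrow> cinner z (a \<cdot>\<^sub>v x) = a * cinner z x"
  unfolding cinner_def by (auto simp: sum_distrib_left algebra_simps)

lemma cinner_zero_left[simp]: "cinner (0\<^sub>v n) z = 0"
  unfolding cinner_def by auto

lemma cinner_commute: "dim_vec x = dim_vec y \<Longrightarrow> cinner y x = cnj (cinner x y)"
  unfolding cinner_def by (auto simp: algebra_simps)

lemma cinner_self: "cinner x x = complex_of_real ((vnorm x)^2)"
proof -
  have "(vnorm x)^2 = (\<Sum>i<dim_vec x. (cmod (x $ i))^2)"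
    unfolding vnorm_def by (simp add: sum_nonneg)
  moreover have "\<And>i. cnj (x$i) * x$i = complex_of_real ((cmod (x$i))^2)"
    by (metis complex_norm_square mult.commute of_real_power)
  ultimately show ?thesis unfolding cinner_def by simp
qed

lemma cinner_mat: assumes "A \<in> carrier_mat m p" "x \<in> carrier_vec p" "y \<in> carrier_vec m"
  shows "cinner (A *\<^sub>v x) y = cinner x (mat_adjoint A *\<^sub>v y)"
proof -
  have "cinner (A *\<^sub>v x) y = (\<Sum>i<m. \<Sum>j<p. cnj (A $$ (i,j)) * cnj (x $ j) * y $ i)"
    using assms unfolding cinner_def
    by (auto simp: scalar_prod_def sum_distrib_right atLeast0LessThan)
  also have "\<dots> = (\<Sum>j<p. \<Sum>i<m. cnj (A $$ (i,j)) * cnj (x $ j) * y $ i)"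
    by (rule sum.swap)
  also have "\<dots> = cinner x (mat_adjoint A *\<^sub>v y)"
    using assms unfolding cinner_def
    by (auto simp: scalar_prod_def sum_distrib_left atLeast0LessThan algebra_simps intro!: sum.cong)
  finally show ?thesis .
qed

lemma vnorm_nonneg: "vnorm x \<ge> 0"
  unfolding vnorm_def by (simp add: sum_nonneg)

lemma isometry_cinner: assumes A: "A \<in> carrier_mat m p" and AA: "mat_adjoint A * A = 1\<^sub>m p"
  and x: "x \<in> carrier_vec p" and y: "y \<in> carrier_vec p"
  shows "cinner (A *\<^sub>v x) (A *\<^sub>v y) = cinner x y"
proof -
  have adj: "mat_adjoint A \<in> carrier_mat p m" using A by auto
  have "cinner (A *\<^sub>v x) (A *\<^sub>v y) = cinner x (mat_adjoint A *\<^sub>v (A *\<^sub>v y))"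
    using cinner_mat[OF A x] A y by auto
  also have "mat_adjoint A *\<^sub>v (A *\<^sub>v y) = (mat_adjoint A * A) *\<^sub>v y"
    using assoc_mult_mat_vec[OF adj A y] by simp
  also have "\<dots> = y" using AA y by simp
  finally show ?thesis .
qed

lemma isometry_vnorm: assumes A: "A \<in> carrier_mat m p" and AA: "mat_adjoint A * A = 1\<^sub>m p"
  and x: "x \<in> carrier_vec p"
  shows "vnorm (A *\<^sub>v x) = vnorm x"
proof -
  have "complex_of_real ((vnorm (A *\<^sub>v x))^2) = complex_of_real ((vnorm x)^2)"
    using isometry_cinner[OF A AA x x] by (simp add: cinner_self)
  then have "(vnorm (A *\<^sub>v x))^2 = (vnorm x)^2" by (simp only: of_real_eq_iff)
  then show ?thesis using vnorm_nonneg by (meson power2_eq_iff_nonneg)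
qed

lemma cols_to_mat: assumes A: "A \<in> carrier_mat n m" and B: "B \<in> carrier_mat n p"
  and h: "\<And>j. j < m \<Longrightarrow> col A j = B *\<^sub>v h j \<and> h j \<in> carrier_vec p"
  shows "A = B * mat p m (\<lambda>(i,j). h j $ i)"
proof (rule eq_matI)
  fix i j assume i: "i < dim_row (B * mat p m (\<lambda>(i,j). h j $ i))" and j: "j < dim_col (B * mat p m (\<lambda>(i,j). h j $ i))"
  then have i: "i < n" and j: "j < m" using B by auto
  have "A $$ (i,j) = col A j $ i" using A i j by auto
  also have "\<dots> = (B *\<^sub>v h j) $ i" using h[OF j] by simp
  also have "\<dots> = row B i \<bullet> h j" using B i by auto
  also have "\<dots> = row B i \<bullet> col (mat p m (\<lambda>(i,j). h j $ i)) j"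
    using h[OF j] j by (intro arg_cong[where f="\<lambda>v. row B i \<bullet> v"]) (auto intro!: eq_vecI)
  also have "\<dots> = (B * mat p m (\<lambda>(i,j). h j $ i)) $$ (i,j)" using B i j by auto
  finally show "A $$ (i,j) = (B * mat p m (\<lambda>(i,j). h j $ i)) $$ (i,j)" .
qed (use A B in auto)

lemma mat_vec_zero: "A \<in> carrier_mat n m \<Longrightarrow> A *\<^sub>v 0\<^sub>v m = 0\<^sub>v n"
  by (intro eq_vecI) (auto simp: scalar_prod_def)




locale arn =
  fixes V :: "complex mat" and b :: "complex vec" and n :: nat
  assumes V: "V \<in> carrier_mat n n" and VV: "mat_adjoint V * V = 1\<^sub>m n"
    and b: "b \<in> carrier_vec n" and bnz: "vnorm b \<noteq> 0"
begin

abbreviation q where "q j \<equiv> ua_q V b j"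
abbreviation qt where "qt j \<equiv> ua_qt V (q (j - 1)) (q j)"

lemma q_carrier[simp]: "q j \<in> carrier_vec n"
proof (induction j rule: less_induct)
  case (less j)
  show ?case
  proof (cases j)
    case 0 then show ?thesis using b by simp
  next
    case (Suc j') then show ?thesis
    proof (cases j')
      case 0 then show ?thesis using b Suc by simp
    next
      case (Suc j'')
      then show ?thesis using \<open>j = Suc j'\<close> V less[of j''] less[of "Suc j''"]
        by (simp add: ua_qt_def)
    qed
  qed
qed

lemma q_dim[simp]: "dim_vec (q j) = n" using q_carrier[of j] by auto

lemma qt_carrier[simp]: "ua_qt V (q i) (q j) \<in> carrier_vec n"
  using V unfolding ua_qt_def by simp

lemma qt_dim[simp]: "dim_vec (ua_qt V (q i) (q j)) = n"
  using qt_carrier by auto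

lemma q0: "q 0 = 0\<^sub>v n" using b by simp

lemma Vq0: "V *\<^sub>v q 0 = 0\<^sub>v n" using q0 mat_vec_zero[OF V] by simp

lemma q_Suc: "1 \<le> j \<Longrightarrow> q (Suc j) = complex_of_real (1 / ua_lsub V b j) \<cdot>\<^sub>v qt j"
  by (cases j) (auto simp: ua_lsub_def)

lemma qt_eq: "1 \<le> j \<Longrightarrow> ua_lsub V b j \<noteq> 0 \<Longrightarrow> qt j = complex_of_real (ua_lsub V b j) \<cdot>\<^sub>v q (Suc j)"
  using q_Suc[of j] by (auto simp: smult_smult_assoc)

lemma unit_cinner: "x \<in> carrier_vec n \<Longrightarrow> y \<in> carrier_vec n \<Longrightarrow> cinner (V *\<^sub>v x) (V *\<^sub>v y) = cinner x y"
  using isometry_cinner[OF V VV] by auto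

definition phi where "phi i x \<longleftrightarrow> x \<in> carrier_vec n \<and> (\<exists>a. \<forall>y\<in>carrier_vec n.
   (\<forall>m. 1 \<le> m \<longrightarrow> m < i \<longrightarrow> cinner (q m) y = 0) \<longrightarrow> cinner x (V *\<^sub>v y) = a * cinner (q 1) (V *\<^sub>v y))"

lemma phi_add: "phi i x \<Longrightarrow> phi i y \<Longrightarrow> phi i (x + y)"
  unfolding phi_def
proof (elim conjE exE, intro conjI)
  fix a c assume x: "x \<in> carrier_vec n" and y: "y \<in> carrier_vec n"
    and a: "\<forall>z\<in>carrier_vec n. (\<forall>m. 1 \<le> m \<longrightarrow> m < i \<longrightarrow> cinner (q m) z = 0) \<longrightarrow> cinner x (V *\<^sub>v z) = a * cinner (q 1) (V *\<^sub>v z)"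
    and c: "\<forall>z\<in>carrier_vec n. (\<forall>m. 1 \<le> m \<longrightarrow> m < i \<longrightarrow> cinner (q m) z = 0) \<longrightarrow> cinner y (V *\<^sub>v z) = c * cinner (q 1) (V *\<^sub>v z)"
  show "x + y \<in> carrier_vec n" using x y by simp
  show "\<exists>a. \<forall>z\<in>carrier_vec n. (\<forall>m. 1 \<le> m \<longrightarrow> m < i \<longrightarrow> cinner (q m) z = 0) \<longrightarrow> cinner (x + y) (V *\<^sub>v z) = a * cinner (q 1) (V *\<^sub>v z)"
    by (rule exI[of _ "a + c"]) (use a c x y V in \<open>auto simp: cinner_add_left[of _ n] algebra_simps\<close>)
qed

lemma phi_smult: "phi i x \<Longrightarrow> phi i (c \<cdot>\<^sub>v x)"
  unfolding phi_def
proof (elim conjE exE, intro conjI)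
  fix a assume x: "x \<in> carrier_vec n"
    and a: "\<forall>z\<in>carrier_vec n. (\<forall>m. 1 \<le> m \<longrightarrow> m < i \<longrightarrow> cinner (q m) z = 0) \<longrightarrow> cinner x (V *\<^sub>v z) = a * cinner (q 1) (V *\<^sub>v z)"
  show "c \<cdot>\<^sub>v x \<in> carrier_vec n" using x by simp
  show "\<exists>a. \<forall>z\<in>carrier_vec n. (\<forall>m. 1 \<le> m \<longrightarrow> m < i \<longrightarrow> cinner (q m) z = 0) \<longrightarrow> cinner (c \<cdot>\<^sub>v x) (V *\<^sub>v z) = a * cinner (q 1) (V *\<^sub>v z)"
    by (rule exI[of _ "cnj c * a"]) (use a in \<open>auto simp: cinner_smult_left\<close>)
qed

lemma phi_minus: "phi i x \<Longrightarrow> phi i y \<Longrightarrow> phi i (x - y)"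
proof -
  assume x: "phi i x" and y: "phi i y"
  have "x - y = x + (-1) \<cdot>\<^sub>v y" using x y unfolding phi_def by auto
  then show ?thesis using phi_add[OF x phi_smult[OF y]] by simp
qed

lemma phi_mono: "phi i x \<Longrightarrow> i \<le> i' \<Longrightarrow> phi i' x"
  unfolding phi_def by (meson order_less_le_trans)

lemma phi_Vq: "m < i \<Longrightarrow> phi i (V *\<^sub>v q m)"
  unfolding phi_def
proof (intro conjI)
  assume mi: "m < i"
  show "V *\<^sub>v q m \<in> carrier_vec n" using V by simp
  show "\<exists>a. \<forall>y\<in>carrier_vec n. (\<forall>m. 1 \<le> m \<longrightarrow> m < i \<longrightarrow> cinner (q m) y = 0) \<longrightarrow> cinner (V *\<^sub>v q m) (V *\<^sub>v y) = a * cinner (q 1) (V *\<^sub>v y)"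
  proof (rule exI[of _ 0], intro ballI impI)
    fix y :: "complex vec" assume y: "y \<in> carrier_vec n" and h: "\<forall>m. 1 \<le> m \<longrightarrow> m < i \<longrightarrow> cinner (q m) y = 0"
    show "cinner (V *\<^sub>v q m) (V *\<^sub>v y) = 0 * cinner (q 1) (V *\<^sub>v y)"
    proof (cases m)
      case 0 then show ?thesis using Vq0 by simp
    next
      case (Suc m') then show ?thesis using unit_cinner[OF q_carrier y] h mi by auto
    qed
  qed
qed

lemma phi_q1: "phi i (q 1)"
  unfolding phi_def using b by (intro conjI exI[of _ 1]) auto

lemma phi_q: "phi i (q i)"
proof (induction i)
  case 0 then show ?case unfolding phi_def using q0 by (intro conjI exI[of _ 0]) auto
next
  case (Suc i)
  show ?case
  proof (cases i)
    case 0 then show ?thesis using phi_q1 by simp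
  next
    case (Suc i')
    then have i1: "1 \<le> i" by simp
    have "phi (Suc i) (qt i)" unfolding ua_qt_def
      by (intro phi_add phi_minus phi_smult phi_Vq phi_mono[OF Suc.IH]) auto
    then show ?thesis using q_Suc[OF i1] phi_smult by simp
  qed
qed

end



locale arnk = arn +
  fixes k :: nat
  assumes nb: "ua_no_breakdown V b k"
begin

lemma lsub_nz: "1 \<le> j \<Longrightarrow> j \<le> k \<Longrightarrow> ua_lsub V b j \<noteq> 0"
  using nb unfolding ua_no_breakdown_def by auto

lemma d_nz: "2 \<le> j \<Longrightarrow> j \<le> k \<Longrightarrow> cinner (q (j - 1)) (V *\<^sub>v q (j - 1)) \<noteq> 0"
  using nb unfolding ua_no_breakdown_def by auto

lemma expand_qt: "x \<in> carrier_vec n \<Longrightarrow> cinner x (qt m) = cinner x (V *\<^sub>v q m)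
   - ua_l V (q (m - 1)) (q m) * cinner x (q m) + ua_u V (q (m - 1)) (q m) * cinner x (V *\<^sub>v q (m - 1))"
  unfolding ua_qt_def using V
  by (simp add: cinner_add_right[of _ n] cinner_minus_right[of _ n] cinner_smult_right)

lemma expand_Vp: "x \<in> carrier_vec n \<Longrightarrow> cinner x (V *\<^sub>v (q m + c \<cdot>\<^sub>v q (m - 1))) = cinner x (V *\<^sub>v q m)
   + c * cinner x (V *\<^sub>v q (m - 1))"
proof -
  assume x: "x \<in> carrier_vec n"
  have "V *\<^sub>v (q m + c \<cdot>\<^sub>v q (m - 1)) = V *\<^sub>v q m + c \<cdot>\<^sub>v (V *\<^sub>v q (m - 1))"
    using V by (simp add: mult_add_distrib_mat_vec[of _ n n] mult_mat_vec[of _ n n])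
  then show ?thesis using x V by (simp add: cinner_add_right[of _ n] cinner_smult_right)
qed

lemma orth_new:
  assumes m1: "1 \<le> m" and mk: "m \<le> k"
    and ON: "\<And>i j. 1 \<le> i \<Longrightarrow> i \<le> m \<Longrightarrow> 1 \<le> j \<Longrightarrow> j \<le> m \<Longrightarrow> cinner (q i) (q j) = (if i = j then 1 else 0)"
    and i1: "1 \<le> i" and im: "i \<le> m"
  shows "cinner (q i) (qt m) = 0"
proof -
  let ?u = "ua_u V (q (m - 1)) (q m)"
  let ?l = "ua_l V (q (m - 1)) (q m)"
  let ?p = "q m + ?u \<cdot>\<^sub>v q (m - 1)"
  have p: "?p \<in> carrier_vec n" by simp
  have key_m1: "cinner (q (m - 1)) (V *\<^sub>v q m) + ?u * cinner (q (m - 1)) (V *\<^sub>v q (m - 1)) = 0"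
    if m2: "2 \<le> m"
  proof -
    have "cinner (q (m - 1)) (V *\<^sub>v q (m - 1)) \<noteq> 0" using d_nz[OF m2 mk] .
    then show ?thesis unfolding ua_u_def by (simp add: field_simps)
  qed
  consider "i = m" | "i = m - 1" "2 \<le> m" | "i < m - 1" using i1 im by linarith
  then show ?thesis
  proof cases
    case 1
    then show ?thesis using expand_qt[of "q i" m] ON[OF i1 im i1 im] unfolding ua_l_def by simp
  next
    case 2
    have "cinner (q i) (q m) = 0" using ON[OF i1 im m1 order.refl] 2 by simp
    then show ?thesis using expand_qt[of "q i" m] key_m1[OF 2(2)] 2 by simp
  next
    case 3
    then have m3: "3 \<le> m" using i1 by linarith
    have orthp: "cinner (q j) ?p = 0" if "1 \<le> j" "j < m - 1" for j
      using ON[of j m] ON[of j "m - 1"] that m3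
      by (simp add: cinner_add_right[of _ n] cinner_smult_right)
    obtain a where a: "\<And>y. y \<in> carrier_vec n \<Longrightarrow> (\<forall>j. 1 \<le> j \<longrightarrow> j < m - 1 \<longrightarrow> cinner (q j) y = 0)
        \<Longrightarrow> cinner (q (m - 1)) (V *\<^sub>v y) = a * cinner (q 1) (V *\<^sub>v y)"
      using phi_q[of "m - 1"] unfolding phi_def by blast
    have "cinner (q (m - 1)) (V *\<^sub>v ?p) = 0"
      using expand_Vp[of "q (m - 1)" m ?u] key_m1 m3 by simp
    then have A: "a * cinner (q 1) (V *\<^sub>v ?p) = 0" using a[OF p] orthp by simp
    have "a \<noteq> 0"
    proof
      assume "a = 0"
      then have "cinner (q (m - 1)) (V *\<^sub>v q (m - 1)) = 0"
        using a[OF q_carrier] ON[of _ "m - 1"] m3 by simp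
      then show False using d_nz[of m] m3 mk by simp
    qed
    with A have B: "cinner (q 1) (V *\<^sub>v ?p) = 0" by simp
    obtain c where c: "\<And>y. y \<in> carrier_vec n \<Longrightarrow> (\<forall>j. 1 \<le> j \<longrightarrow> j < i \<longrightarrow> cinner (q j) y = 0)
        \<Longrightarrow> cinner (q i) (V *\<^sub>v y) = c * cinner (q 1) (V *\<^sub>v y)"
      using phi_q[of i] unfolding phi_def by blast
    have C: "cinner (q i) (V *\<^sub>v ?p) = 0" using c[OF p] orthp 3 B by simp
    have "cinner (q i) (q m) = 0" using ON[OF i1 im m1 order.refl] 3 by simp
    then show ?thesis using expand_qt[of "q i" m] expand_Vp[of "q i" m ?u] C by simp
  qed
qed

lemma ON: "m \<le> Suc k \<Longrightarrow> 1 \<le> i \<Longrightarrow> i \<le> m \<Longrightarrow> 1 \<le> j \<Longrightarrow> j \<le> m \<Longrightarrow> cinner (q i) (q j) = (if i = j then 1 else 0)"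
proof (induction m arbitrary: i j)
  case 0 then show ?case by simp
next
  case (Suc m)
  show ?case
  proof (cases "m = 0")
    case True
    then have "i = 1" "j = 1" using Suc by auto
    have "cinner (q 1) (q 1) = complex_of_real (1 / vnorm b) * complex_of_real (1 / vnorm b) * cinner b b"
      by (simp add: cinner_smult_left cinner_smult_right)
    also have "\<dots> = 1" using bnz unfolding cinner_self by (simp add: field_simps power2_eq_square)
    finally show ?thesis using \<open>i = 1\<close> \<open>j = 1\<close> by simp
  next
    case False
    then have m1: "1 \<le> m" and mk: "m \<le> k" using Suc by auto
    have IH: "\<And>i j. 1 \<le> i \<Longrightarrow> i \<le> m \<Longrightarrow> 1 \<le> j \<Longrightarrow> j \<le> m \<Longrightarrow> cinner (q i) (q j) = (if i = j then 1 else 0)"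
      using Suc by auto
    have qS: "q (Suc m) = complex_of_real (1 / ua_lsub V b m) \<cdot>\<^sub>v qt m" using q_Suc[OF m1] .
    have new: "cinner (q i) (q (Suc m)) = 0" if "1 \<le> i" "i \<le> m" for i
      using orth_new[OF m1 mk IH that] qS by (simp add: cinner_smult_right)
    have self: "cinner (q (Suc m)) (q (Suc m)) = 1"
    proof -
      have "cinner (q (Suc m)) (q (Suc m)) = complex_of_real (1 / ua_lsub V b m) * complex_of_real (1 / ua_lsub V b m) * cinner (qt m) (qt m)"
        unfolding qS by (simp add: cinner_smult_left cinner_smult_right)
      also have "cinner (qt m) (qt m) = complex_of_real ((ua_lsub V b m)^2)"
        unfolding cinner_self ua_lsub_def by simp
      finally show ?thesis using lsub_nz[OF m1 mk] by (simp add: field_simps power2_eq_square)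
    qed
    show ?thesis
    proof (cases "i = Suc m \<or> j = Suc m")
      case True
      then show ?thesis
      proof
        assume i: "i = Suc m"
        show ?thesis
        proof (cases "j = Suc m")
          case True then show ?thesis using i self by simp
        next
          case False
          then show ?thesis using i new[of j] Suc.prems cinner_commute[of "q j" "q (Suc m)"] by auto
        qed
      next
        assume j: "j = Suc m"
        show ?thesis
        proof (cases "i = Suc m")
          case True then show ?thesis using j self by simp
        next
          case False
          then show ?thesis using j new[of i] Suc.prems by auto
        qed
      qed
    next
      case False
      then show ?thesis using IH Suc.prems by auto
    qed
  qed
qed

end



declare ua_q.simps(3)[simp del]

lemma lin3: assumes A: "(A :: complex mat) \<in> carrier_mat m p" and x: "x \<in> carrier_vec p" and y: "y \<in> carrier_vec p" and z: "z \<in> carrier_vec p"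
  shows "A *\<^sub>v (a \<cdot>\<^sub>v x + c \<cdot>\<^sub>v y + d \<cdot>\<^sub>v z) = a \<cdot>\<^sub>v (A *\<^sub>v x) + c \<cdot>\<^sub>v (A *\<^sub>v y) + d \<cdot>\<^sub>v (A *\<^sub>v z)"
  by (simp add: mult_add_distrib_mat_vec[OF A] mult_mat_vec[OF A] x y z)

context arn begin

lemma Q_carrier[simp]: "ua_Q V b m \<in> carrier_mat n m"
  unfolding ua_Q_def using b by auto

lemma Q_dims[simp]: "dim_row (ua_Q V b m) = n" "dim_col (ua_Q V b m) = m"
  unfolding ua_Q_def using b by auto

lemma Q_col: "j < m \<Longrightarrow> col (ua_Q V b m) j = q (j + 1)"
  unfolding ua_Q_def using b by (auto intro!: eq_vecI)

lemma Q_unit: "j < m \<Longrightarrow> ua_Q V b m *\<^sub>v unit_vec m j = q (j + 1)"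
  unfolding ua_Q_def using b by (auto intro!: eq_vecI)

lemma usup1: "ua_usup V b 1 = 0"
  unfolding ua_usup_def ua_u_def using q0 by simp

lemma QQ: "m \<le> Suc k \<Longrightarrow> arnk V b n k \<Longrightarrow> mat_adjoint (ua_Q V b m) * ua_Q V b m = 1\<^sub>m m"
proof (intro eq_matI)
  fix i j assume m: "m \<le> Suc k" and a: "arnk V b n k"
    and i: "i < dim_row (1\<^sub>m m :: complex mat)" and j: "j < dim_col (1\<^sub>m m :: complex mat)"
  then have i: "i < m" and j: "j < m" by auto
  have "(mat_adjoint (ua_Q V b m) * ua_Q V b m) $$ (i,j) = (\<Sum>r<n. cnj (q (i+1) $ r) * q (j+1) $ r)"
    using i j b unfolding ua_Q_def
    by (auto simp: scalar_prod_def atLeast0LessThan intro!: sum.cong)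
  also have "\<dots> = cinner (q (i+1)) (q (j+1))" unfolding cinner_def by simp
  also have "\<dots> = (if i = j then 1 else 0)" using arnk.ON[OF a, of m "i+1" "j+1"] i j m by auto
  finally show "(mat_adjoint (ua_Q V b m) * ua_Q V b m) $$ (i,j) = 1\<^sub>m m $$ (i,j)" using i j by simp
qed (auto simp: ua_Q_def)

lemma b_eq: "ua_Q V b (Suc m) *\<^sub>v (complex_of_real (vnorm b) \<cdot>\<^sub>v unit_vec (Suc m) 0) = b"
proof -
  have "ua_Q V b (Suc m) *\<^sub>v (complex_of_real (vnorm b) \<cdot>\<^sub>v unit_vec (Suc m) 0)
     = complex_of_real (vnorm b) \<cdot>\<^sub>v (ua_Q V b (Suc m) *\<^sub>v unit_vec (Suc m) 0)"
    by (rule mult_mat_vec[OF Q_carrier]) simp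
  also have "\<dots> = complex_of_real (vnorm b) \<cdot>\<^sub>v q 1" using Q_unit[of 0 "Suc m"] by simp
  also have "\<dots> = b" using bnz b by (auto intro!: eq_vecI)
  finally show ?thesis .
qed

end

locale arnc = arnk +
  fixes c1 c2 :: real
begin

abbreviation "UU \<equiv> ua_U V b k"
abbreviation "LL \<equiv> ua_L V b k"
abbreviation "TT \<equiv> complex_of_real c1 \<cdot>\<^sub>m UU + complex_of_real c2 \<cdot>\<^sub>m LL"
abbreviation "Tt \<equiv> mat (k + 1) k (\<lambda>(i, j). if i < k then TT $$ (i, j)
   else if j = k - 1 then complex_of_real (c2 * ua_lsub V b k) else 0)"
abbreviation "DD \<equiv> complex_of_real c1 \<cdot>\<^sub>m 1\<^sub>m n + complex_of_real c2 \<cdot>\<^sub>m V"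
abbreviation "WW \<equiv> ua_Q V b k * UU"

lemma U_carrier[simp]: "UU \<in> carrier_mat k k" unfolding ua_U_def by auto
lemma L_carrier[simp]: "LL \<in> carrier_mat k k" unfolding ua_L_def by auto
lemma UL_dims[simp]: "dim_row UU = k" "dim_col UU = k" "dim_row LL = k" "dim_col LL = k"
  unfolding ua_U_def ua_L_def by auto
lemma T_carrier[simp]: "TT \<in> carrier_mat k k" by simp
lemma Tt_carrier[simp]: "Tt \<in> carrier_mat (Suc k) k" by simp
lemma D_carrier[simp]: "DD \<in> carrier_mat n n" using V by simp
lemma W_carrier[simp]: "WW \<in> carrier_mat n k" by (rule mult_carrier_mat[OF Q_carrier U_carrier])

lemma Tt_entry: "i < Suc k \<Longrightarrow> j < k \<Longrightarrow> Tt $$ (i,j) =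
   (if i = j then c1 + c2 * ua_ldiag V b (j+1) else 0) + (if i + 1 = j then c1 * ua_usup V b (j+1) else 0)
   + (if i = j + 1 then c2 * ua_lsub V b (j+1) else 0)"
  unfolding ua_U_def ua_L_def by auto

lemma Tt_col: "j < k \<Longrightarrow> col Tt j = complex_of_real c1 * ua_usup V b (j+1) \<cdot>\<^sub>v unit_vec (Suc k) (j - 1)
   + (c1 + c2 * ua_ldiag V b (j+1)) \<cdot>\<^sub>v unit_vec (Suc k) j
   + complex_of_real (c2 * ua_lsub V b (j+1)) \<cdot>\<^sub>v unit_vec (Suc k) (j + 1)"
proof (intro eq_vecI)
  fix i assume j: "j < k" and i: "i < dim_vec (complex_of_real c1 * ua_usup V b (j+1) \<cdot>\<^sub>v unit_vec (Suc k) (j - 1)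
   + (c1 + c2 * ua_ldiag V b (j+1)) \<cdot>\<^sub>v unit_vec (Suc k) j
   + complex_of_real (c2 * ua_lsub V b (j+1)) \<cdot>\<^sub>v unit_vec (Suc k) (j + 1))"
  then have i: "i < Suc k" by simp
  have "col Tt j $ i = Tt $$ (i,j)" using i j by simp
  note this[unfolded Tt_entry[OF i j]]
  then show "col Tt j $ i = (complex_of_real c1 * ua_usup V b (j+1) \<cdot>\<^sub>v unit_vec (Suc k) (j - 1)
   + (c1 + c2 * ua_ldiag V b (j+1)) \<cdot>\<^sub>v unit_vec (Suc k) j
   + complex_of_real (c2 * ua_lsub V b (j+1)) \<cdot>\<^sub>v unit_vec (Suc k) (j + 1)) $ i"
    using i j usup1 by (cases "j = 0") (auto simp del: index_mat simp: unit_vec_def)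
qed simp

lemma D_mult: "p \<in> carrier_vec n \<Longrightarrow> DD *\<^sub>v p = complex_of_real c1 \<cdot>\<^sub>v p + complex_of_real c2 \<cdot>\<^sub>v (V *\<^sub>v p)"
proof -
  assume p: "p \<in> carrier_vec n"
  have "DD *\<^sub>v p = (complex_of_real c1 \<cdot>\<^sub>m 1\<^sub>m n) *\<^sub>v p + (complex_of_real c2 \<cdot>\<^sub>m V) *\<^sub>v p"
    using V p by (intro add_mult_distrib_mat_vec) auto
  also have "(complex_of_real c1 \<cdot>\<^sub>m 1\<^sub>m n) *\<^sub>v p = complex_of_real c1 \<cdot>\<^sub>v p"
    using p by (intro eq_vecI) (auto simp: smult_scalar_prod_distrib[of _ n])
  also have "(complex_of_real c2 \<cdot>\<^sub>m V) *\<^sub>v p = complex_of_real c2 \<cdot>\<^sub>v (V *\<^sub>v p)"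
    using p V by (intro eq_vecI) (auto simp: smult_scalar_prod_distrib[of _ n])
  finally show ?thesis .
qed

lemma colU: "j < k \<Longrightarrow> col UU j = unit_vec k j + ua_usup V b (j+1) \<cdot>\<^sub>v unit_vec k (j - 1)"
  unfolding ua_U_def using usup1 by (cases "j = 0") (auto intro!: eq_vecI simp: unit_vec_def)

lemma colW: assumes j: "j < k" shows "col WW j = q (j+1) + ua_usup V b (j+1) \<cdot>\<^sub>v q j"
proof -
  have "col WW j = ua_Q V b k *\<^sub>v col UU j" by (rule col_mult2[OF Q_carrier U_carrier j])
  also have "\<dots> = ua_Q V b k *\<^sub>v unit_vec k j + ua_usup V b (j+1) \<cdot>\<^sub>v (ua_Q V b k *\<^sub>v unit_vec k (j - 1))"
    unfolding colU[OF j] using j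
    by (simp add: mult_add_distrib_mat_vec[OF Q_carrier] mult_mat_vec[OF Q_carrier])
  also have "\<dots> = q (j+1) + ua_usup V b (j+1) \<cdot>\<^sub>v q j"
  proof (cases "j = 0")
    case True then show ?thesis using Q_unit[of 0 k] j usup1 by (auto intro!: eq_vecI)
  next
    case False then show ?thesis using Q_unit[of j k] Q_unit[of "j - 1" k] j by simp
  qed
  finally show ?thesis .
qed

lemma arnoldi: "DD * WW = ua_Q V b (Suc k) * Tt"
proof (rule mat_col_eqI)
  fix j assume "j < dim_col (ua_Q V b (Suc k) * Tt)"
  then have j: "j < k" by simp
  let ?u = "ua_usup V b (j+1)"
  let ?l = "ua_ldiag V b (j+1)"
  let ?la = "ua_lsub V b (j+1)"
  have j1: "1 \<le> j + 1" "j + 1 \<le> k" using j by auto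
  have rel: "qt (j+1) = complex_of_real ?la \<cdot>\<^sub>v q (Suc (j+1))"
    by (rule qt_eq[OF j1(1) lsub_nz[OF j1]])
  have L: "col (DD * WW) j = DD *\<^sub>v (q (j+1) + ?u \<cdot>\<^sub>v q j)"
    using j colW[OF j] by (simp add: col_mult2[OF D_carrier W_carrier])
  have R: "col (ua_Q V b (Suc k) * Tt) j = complex_of_real c1 * ?u \<cdot>\<^sub>v (ua_Q V b (Suc k) *\<^sub>v unit_vec (Suc k) (j - 1))
     + (c1 + c2 * ?l) \<cdot>\<^sub>v q (j+1) + complex_of_real (c2 * ?la) \<cdot>\<^sub>v q (j+2)"
  proof -
    have "col (ua_Q V b (Suc k) * Tt) j = ua_Q V b (Suc k) *\<^sub>v col Tt j" by (rule col_mult2[OF Q_carrier Tt_carrier j])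
    also have "\<dots> = complex_of_real c1 * ?u \<cdot>\<^sub>v (ua_Q V b (Suc k) *\<^sub>v unit_vec (Suc k) (j - 1))
     + (c1 + c2 * ?l) \<cdot>\<^sub>v (ua_Q V b (Suc k) *\<^sub>v unit_vec (Suc k) j) + complex_of_real (c2 * ?la) \<cdot>\<^sub>v (ua_Q V b (Suc k) *\<^sub>v unit_vec (Suc k) (j + 1))"
      unfolding Tt_col[OF j] by (rule lin3[OF Q_carrier]) auto
    finally show ?thesis using j Q_unit[of j "Suc k"] Q_unit[of "j+1" "Suc k"] by simp
  qed
  show "col (DD * WW) j = col (ua_Q V b (Suc k) * Tt) j"
    unfolding L R D_mult[of "q (j+1) + ?u \<cdot>\<^sub>v q j", OF add_carrier_vec[OF q_carrier smult_carrier_vec[THEN iffD2, OF q_carrier]]]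
  proof (intro eq_vecI)
    fix r assume "r < dim_vec (complex_of_real c1 * ?u \<cdot>\<^sub>v (ua_Q V b (Suc k) *\<^sub>v unit_vec (Suc k) (j - 1))
     + (c1 + c2 * ?l) \<cdot>\<^sub>v q (j+1) + complex_of_real (c2 * ?la) \<cdot>\<^sub>v q (j+2))"
    then have r: "r < n" by simp
    have relr: "(V *\<^sub>v q (j+1)) $ r - ?l * q (j+1) $ r + ?u * (V *\<^sub>v q j) $ r = ?la * q (j+2) $ r"
      using arg_cong[OF rel, of "\<lambda>v. v $ r"] r V unfolding ua_qt_def ua_ldiag_def ua_usup_def by simp
    have Vp: "V *\<^sub>v (q (j+1) + ?u \<cdot>\<^sub>v q j) = V *\<^sub>v q (j+1) + ?u \<cdot>\<^sub>v (V *\<^sub>v q j)"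
      using V by (simp add: mult_add_distrib_mat_vec[OF V] mult_mat_vec[OF V])
    have Qe: "?u * (ua_Q V b (Suc k) *\<^sub>v unit_vec (Suc k) (j - 1)) $ r = ?u * q j $ r"
    proof (cases "j = 0")
      case True then show ?thesis using usup1 by simp
    next
      case False then show ?thesis using Q_unit[of "j - 1" "Suc k"] j by simp
    qed
    have LHS: "(complex_of_real c1 \<cdot>\<^sub>v (q (j+1) + ?u \<cdot>\<^sub>v q j) + complex_of_real c2 \<cdot>\<^sub>v (V *\<^sub>v q (j+1) + ?u \<cdot>\<^sub>v (V *\<^sub>v q j))) $ r
       = c1 * (q (j+1) $ r + ?u * q j $ r) + c2 * ((V *\<^sub>v q (j+1)) $ r + ?u * (V *\<^sub>v q j) $ r)"
      using r V by simp
    have RHS: "(complex_of_real c1 * ?u \<cdot>\<^sub>v (ua_Q V b (Suc k) *\<^sub>v unit_vec (Suc k) (j - 1))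
     + (c1 + c2 * ?l) \<cdot>\<^sub>v q (j+1) + complex_of_real (c2 * ?la) \<cdot>\<^sub>v q (j+2)) $ r
     = c1 * (?u * (ua_Q V b (Suc k) *\<^sub>v unit_vec (Suc k) (j - 1)) $ r) + (c1 + c2 * ?l) * q (j+1) $ r + c2 * (?la * q (j+2) $ r)"
      using r by simp
    show "(complex_of_real c1 \<cdot>\<^sub>v (q (j+1) + ?u \<cdot>\<^sub>v q j) + complex_of_real c2 \<cdot>\<^sub>v (V *\<^sub>v (q (j+1) + ?u \<cdot>\<^sub>v q j))) $ r
      = (complex_of_real c1 * ?u \<cdot>\<^sub>v (ua_Q V b (Suc k) *\<^sub>v unit_vec (Suc k) (j - 1))
     + (c1 + c2 * ?l) \<cdot>\<^sub>v q (j+1) + complex_of_real (c2 * ?la) \<cdot>\<^sub>v q (j+2)) $ r"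
      unfolding Vp LHS RHS Qe relr[symmetric] by (simp add: algebra_simps)
  qed (use V in simp)
qed (use V in \<open>auto simp: ua_U_def\<close>)

end



definition colsp :: "complex mat \<Rightarrow> complex vec set" where
  "colsp A = {A *\<^sub>v h | h. h \<in> carrier_vec (dim_col A)}"

lemma colspI: "h \<in> carrier_vec (dim_col A) \<Longrightarrow> x = A *\<^sub>v h \<Longrightarrow> x \<in> colsp A"
  unfolding colsp_def by auto

lemma colspE: "x \<in> colsp A \<Longrightarrow> (\<And>h. h \<in> carrier_vec (dim_col A) \<Longrightarrow> x = A *\<^sub>v h \<Longrightarrow> P) \<Longrightarrow> P"
  unfolding colsp_def by auto

lemma colsp_zero: "A \<in> carrier_mat nr m \<Longrightarrow> 0\<^sub>v nr \<in> colsp A"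
  by (rule colspI[of "0\<^sub>v m"]) (auto simp: mat_vec_zero)

lemma colsp_add: assumes A: "A \<in> carrier_mat nr m" and x: "x \<in> colsp A" and y: "y \<in> colsp A"
  shows "x + y \<in> colsp A"
proof -
  obtain g h where g: "g \<in> carrier_vec m" "x = A *\<^sub>v g" and h: "h \<in> carrier_vec m" "y = A *\<^sub>v h"
    using x y A by (auto elim!: colspE)
  show ?thesis by (rule colspI[of "g + h"]) (use A g h in \<open>auto simp: mult_add_distrib_mat_vec[OF A]\<close>)
qed

lemma colsp_smult: assumes A: "A \<in> carrier_mat nr m" and x: "x \<in> colsp A"
  shows "c \<cdot>\<^sub>v x \<in> colsp A"
proof -
  obtain g where g: "g \<in> carrier_vec m" "x = A *\<^sub>v g"
    using x A by (auto elim!: colspE)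
  show ?thesis by (rule colspI[of "c \<cdot>\<^sub>v g"]) (use A g in \<open>auto simp: mult_mat_vec[OF A]\<close>)
qed

lemma colsp_carrier: "A \<in> carrier_mat nr m \<Longrightarrow> x \<in> colsp A \<Longrightarrow> x \<in> carrier_vec nr"
  by (auto elim!: colspE)

lemma colsp_minus: assumes A: "A \<in> carrier_mat nr m" and x: "x \<in> colsp A" and y: "y \<in> colsp A"
  shows "x - y \<in> colsp A"
proof -
  have "x - y = x + (-1) \<cdot>\<^sub>v y" using colsp_carrier[OF A x] colsp_carrier[OF A y] by (auto intro!: eq_vecI)
  then show ?thesis using colsp_add[OF A x colsp_smult[OF A y]] by simp
qed

lemma colsp_col: "A \<in> carrier_mat nr m \<Longrightarrow> j < m \<Longrightarrow> col A j \<in> colsp A"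
  by (rule colspI[of "unit_vec m j"]) (auto intro!: eq_vecI)

lemma colsp_sub: assumes A: "A \<in> carrier_mat nr m" and B: "B \<in> carrier_mat nr p"
  and cols: "\<And>j. j < m \<Longrightarrow> col A j \<in> colsp B"
  shows "colsp A \<subseteq> colsp B"
proof
  fix x assume x: "x \<in> colsp A"
  define h where "h j = (SOME g. g \<in> carrier_vec p \<and> col A j = B *\<^sub>v g)" for j
  have h: "col A j = B *\<^sub>v h j \<and> h j \<in> carrier_vec p" if "j < m" for j
  proof -
    have "\<exists>g. g \<in> carrier_vec p \<and> col A j = B *\<^sub>v g" using cols[OF that] B by (auto elim!: colspE)
    then show ?thesis unfolding h_def by (metis (mono_tags, lifting) someI_ex)
  qed
  let ?H = "mat p m (\<lambda>(i,j). h j $ i)"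
  have AH: "A = B * ?H" by (rule cols_to_mat[OF A B h])
  obtain g where g: "g \<in> carrier_vec m" "x = A *\<^sub>v g" using x A by (auto elim!: colspE)
  have "x = B *\<^sub>v (?H *\<^sub>v g)" using g AH B by (simp add: assoc_mult_mat_vec[of _ nr p _ m])
  moreover have "?H *\<^sub>v g \<in> carrier_vec p" using g by (intro mult_mat_vec_carrier[of _ p m]) auto
  ultimately show "x \<in> colsp B" using B by (intro colspI[of "?H *\<^sub>v g"]) auto
qed

lemma colsp_mult: assumes M: "M \<in> carrier_mat nr nr'" and A: "A \<in> carrier_mat nr' m" and B: "B \<in> carrier_mat nr p"
  and cols: "\<And>j. j < m \<Longrightarrow> M *\<^sub>v col A j \<in> colsp B" and x: "x \<in> colsp A"
  shows "M *\<^sub>v x \<in> colsp B"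
proof -
  have MA: "M * A \<in> carrier_mat nr m" using M A by simp
  have sub: "colsp (M * A) \<subseteq> colsp B"
  proof (rule colsp_sub[OF MA B])
    fix j assume j: "j < m"
    show "col (M * A) j \<in> colsp B" using col_mult2[OF M A j] cols[OF j] by simp
  qed
  obtain g where g: "g \<in> carrier_vec m" "x = A *\<^sub>v g" using x A by (auto elim!: colspE)
  have "M *\<^sub>v x = (M * A) *\<^sub>v g" using g M A by (simp add: assoc_mult_mat_vec)
  then have "M *\<^sub>v x \<in> colsp (M * A)" using g MA by (intro colspI) auto
  then show ?thesis using sub by auto
qed

lemma colsp_right: assumes A: "A \<in> carrier_mat nr m" and X: "X \<in> carrier_mat m p"
  shows "colsp (A * X) \<subseteq> colsp A"
proof
  fix x assume "x \<in> colsp (A * X)"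
  then obtain g where g: "g \<in> carrier_vec p" "x = (A * X) *\<^sub>v g" using A X by (auto elim!: colspE)
  then have "x = A *\<^sub>v (X *\<^sub>v g)" using A X by (simp add: assoc_mult_mat_vec)
  then show "x \<in> colsp A" using X g A by (intro colspI) auto
qed

lemma pow_vec: assumes A: "(A :: complex mat) \<in> carrier_mat n n" and v: "v \<in> carrier_vec n"
  shows "(A ^\<^sub>m Suc j) *\<^sub>v v = A *\<^sub>v ((A ^\<^sub>m j) *\<^sub>v v)"
proof -
  have "\<forall>v\<in>carrier_vec n. (A ^\<^sub>m j) *\<^sub>v (A *\<^sub>v v) = A *\<^sub>v ((A ^\<^sub>m j) *\<^sub>v v)"
  proof (induction j)
    case 0 then show ?case using A by auto
  next
    case (Suc j)
    show ?case
    proof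
      fix v :: "complex vec" assume v: "v \<in> carrier_vec n"
      have "(A ^\<^sub>m Suc j) *\<^sub>v (A *\<^sub>v v) = (A ^\<^sub>m j) *\<^sub>v (A *\<^sub>v (A *\<^sub>v v))"
        using A v by (simp add: assoc_mult_mat_vec[of _ n n])
      also have "\<dots> = A *\<^sub>v ((A ^\<^sub>m j) *\<^sub>v (A *\<^sub>v v))" using Suc.IH A v by simp
      also have "(A ^\<^sub>m j) *\<^sub>v (A *\<^sub>v v) = (A ^\<^sub>m Suc j) *\<^sub>v v"
        using A v by (simp add: assoc_mult_mat_vec[of _ n n])
      finally show "(A ^\<^sub>m Suc j) *\<^sub>v (A *\<^sub>v v) = A *\<^sub>v ((A ^\<^sub>m Suc j) *\<^sub>v v)" .
    qed
  qed
  then have "(A ^\<^sub>m j) *\<^sub>v (A *\<^sub>v v) = A *\<^sub>v ((A ^\<^sub>m j) *\<^sub>v v)" using v by auto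
  moreover have "(A ^\<^sub>m Suc j) *\<^sub>v v = (A ^\<^sub>m j) *\<^sub>v (A *\<^sub>v v)"
    using A v by (simp add: assoc_mult_mat_vec[of _ n n])
  ultimately show ?thesis by simp
qed




context arnc begin

abbreviation "KK m \<equiv> mat n m (\<lambda>(i, j). ((DD ^\<^sub>m j) *\<^sub>v b) $ i)"

lemma krylov_eq: "krylov DD b m = colsp (KK m)"
  unfolding krylov_def colsp_def using b by auto

lemma KK_carrier[simp]: "KK m \<in> carrier_mat n m" by simp

lemma KK_col: "j < m \<Longrightarrow> col (KK m) j = (DD ^\<^sub>m j) *\<^sub>v b"
  using b V by (auto intro!: eq_vecI)

lemma Q_mono: "m \<le> m' \<Longrightarrow> colsp (ua_Q V b m) \<subseteq> colsp (ua_Q V b m')"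
  by (rule colsp_sub[OF Q_carrier Q_carrier]) (metis Q_col Q_carrier colsp_col order_less_le_trans)

lemma q_in_Q: "i \<le> m \<Longrightarrow> q i \<in> colsp (ua_Q V b m)"
proof (cases i)
  case 0 then show ?thesis using q0 colsp_zero[OF Q_carrier] by simp
next
  case (Suc i')
  assume "i \<le> m"
  then show ?thesis using Suc Q_col[of i' m] colsp_col[OF Q_carrier, of i' m] by simp
qed

lemma Vq_sp: "i \<le> k \<Longrightarrow> V *\<^sub>v q i \<in> colsp (ua_Q V b (Suc i))"
proof (induction i)
  case 0 then show ?case using Vq0 colsp_zero[OF Q_carrier] by simp
next
  case (Suc i)
  let ?l = "ua_ldiag V b (Suc i)"
  let ?u = "ua_usup V b (Suc i)"
  let ?la = "ua_lsub V b (Suc i)"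
  have rel: "qt (Suc i) = complex_of_real ?la \<cdot>\<^sub>v q (Suc (Suc i))"
    by (rule qt_eq) (use lsub_nz Suc.prems in auto)
  have eq: "V *\<^sub>v q (Suc i) = (complex_of_real ?la \<cdot>\<^sub>v q (Suc (Suc i)) + ?l \<cdot>\<^sub>v q (Suc i)) - ?u \<cdot>\<^sub>v (V *\<^sub>v q i)"
  proof (intro eq_vecI)
    fix r assume "r < dim_vec ((complex_of_real ?la \<cdot>\<^sub>v q (Suc (Suc i)) + ?l \<cdot>\<^sub>v q (Suc i)) - ?u \<cdot>\<^sub>v (V *\<^sub>v q i))"
    then have r: "r < n" using V by simp
    have "(V *\<^sub>v q (Suc i)) $ r - ?l * q (Suc i) $ r + ?u * (V *\<^sub>v q i) $ r = ?la * q (Suc (Suc i)) $ r"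
      using arg_cong[OF rel, of "\<lambda>v. v $ r"] r V unfolding ua_qt_def ua_ldiag_def ua_usup_def by simp
    then show "(V *\<^sub>v q (Suc i)) $ r = ((complex_of_real ?la \<cdot>\<^sub>v q (Suc (Suc i)) + ?l \<cdot>\<^sub>v q (Suc i)) - ?u \<cdot>\<^sub>v (V *\<^sub>v q i)) $ r"
      using r V by (simp add: algebra_simps)
  qed (use V in simp)
  have A: "V *\<^sub>v q i \<in> colsp (ua_Q V b (Suc (Suc i)))" using Suc Q_mono[of "Suc i" "Suc (Suc i)"] by auto
  show ?case unfolding eq
    by (intro colsp_minus[OF Q_carrier] colsp_add[OF Q_carrier] colsp_smult[OF Q_carrier] q_in_Q A) auto
qed

lemma Dq_sp: "i \<le> k \<Longrightarrow> DD *\<^sub>v q i \<in> colsp (ua_Q V b (Suc i))"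
  unfolding D_mult[OF q_carrier]
  by (intro colsp_add[OF Q_carrier] colsp_smult[OF Q_carrier] q_in_Q Vq_sp) auto

lemma Kry_sp: "j < k \<Longrightarrow> (DD ^\<^sub>m j) *\<^sub>v b \<in> colsp (ua_Q V b (Suc j))"
proof (induction j)
  case 0
  have "b \<in> colsp (ua_Q V b 1)"
    by (rule colspI[of "complex_of_real (vnorm b) \<cdot>\<^sub>v unit_vec 1 0"]) (use b_eq[of 0] in auto)
  then show ?case using b V by simp
next
  case (Suc j)
  have "(DD ^\<^sub>m Suc j) *\<^sub>v b = DD *\<^sub>v ((DD ^\<^sub>m j) *\<^sub>v b)" by (rule pow_vec[OF D_carrier b])
  also have "\<dots> \<in> colsp (ua_Q V b (Suc (Suc j)))"
  proof (rule colsp_mult[OF D_carrier Q_carrier Q_carrier])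
    show "(DD ^\<^sub>m j) *\<^sub>v b \<in> colsp (ua_Q V b (Suc j))" using Suc by simp
    fix i assume i: "i < Suc j"
    have "DD *\<^sub>v q (Suc i) \<in> colsp (ua_Q V b (Suc (Suc i)))" using Dq_sp[of "Suc i"] i Suc.prems by simp
    also have "\<dots> \<subseteq> colsp (ua_Q V b (Suc (Suc j)))" using Q_mono i by simp
    finally show "DD *\<^sub>v col (ua_Q V b (Suc j)) i \<in> colsp (ua_Q V b (Suc (Suc j)))" using Q_col[OF i] by simp
  qed
  finally show ?case .
qed

lemma K_sub_Q: "colsp (KK k) \<subseteq> colsp (ua_Q V b k)"
proof (rule colsp_sub[OF KK_carrier Q_carrier])
  fix j assume j: "j < k"
  show "col (KK k) j \<in> colsp (ua_Q V b k)" using KK_col[OF j] Kry_sp[OF j] Q_mono[of "Suc j" k] j by auto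
qed

lemma U_inv: "\<exists>Ui. Ui \<in> carrier_mat k k \<and> UU * Ui = 1\<^sub>m k"
proof -
  have ut: "upper_triangular UU" unfolding ua_U_def upper_triangular_def by auto
  have "det UU = prod_list (diag_mat UU)" by (rule det_upper_triangular[OF ut U_carrier])
  also have "\<dots> = 1" unfolding prod_list_diag_prod by (simp add: ua_U_def)
  finally have "det UU \<noteq> 0" by simp
  from det_non_zero_imp_unit[OF U_carrier this, of undefined]
  show ?thesis unfolding Units_def ring_mat_def by auto
qed

lemma Q_sub_W: "colsp (ua_Q V b k) \<subseteq> colsp WW"
proof -
  obtain Ui where Ui: "Ui \<in> carrier_mat k k" "UU * Ui = 1\<^sub>m k" using U_inv by blast
  have "WW * Ui = ua_Q V b k * (UU * Ui)" using Ui by (simp add: assoc_mult_mat[of _ n k _ k _ k])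
  also have "\<dots> = ua_Q V b k" using Ui by simp
  finally have "ua_Q V b k = WW * Ui" by simp
  then show ?thesis using colsp_right[OF W_carrier Ui(1)] by simp
qed

lemma K_sub_W: "krylov DD b k \<subseteq> colsp WW"
  using K_sub_Q Q_sub_W krylov_eq by auto

lemma KK_mono: "m \<le> m' \<Longrightarrow> colsp (KK m) \<subseteq> colsp (KK m')"
proof (rule colsp_sub[OF KK_carrier KK_carrier])
  fix j assume "m \<le> m'" "j < m"
  then show "col (KK m) j \<in> colsp (KK m')" using KK_col[of j m] KK_col[of j m'] colsp_col[OF KK_carrier, of j m'] by simp
qed

lemma V_KK: assumes c2: "c2 \<noteq> 0" and x: "x \<in> colsp (KK m)"
  shows "V *\<^sub>v x \<in> colsp (KK (Suc m))"
proof -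
  have xc: "x \<in> carrier_vec n" using colsp_carrier[OF KK_carrier x] .
  have Dx: "DD *\<^sub>v x \<in> colsp (KK (Suc m))"
  proof (rule colsp_mult[OF D_carrier KK_carrier KK_carrier _ x])
    fix j assume j: "j < m"
    have "DD *\<^sub>v col (KK m) j = (DD ^\<^sub>m Suc j) *\<^sub>v b" using KK_col[OF j] pow_vec[OF D_carrier b] by simp
    also have "\<dots> = col (KK (Suc m)) (Suc j)" using KK_col[of "Suc j" "Suc m"] j by simp
    finally show "DD *\<^sub>v col (KK m) j \<in> colsp (KK (Suc m))" using colsp_col[OF KK_carrier, of "Suc j" "Suc m"] j by simp
  qed
  have x2: "x \<in> colsp (KK (Suc m))" using x KK_mono[of m "Suc m"] by auto
  have eq: "V *\<^sub>v x = complex_of_real (1 / c2) \<cdot>\<^sub>v (DD *\<^sub>v x - complex_of_real c1 \<cdot>\<^sub>v x)"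
    unfolding D_mult[OF xc]
  proof (intro eq_vecI)
    fix r assume "r < dim_vec (complex_of_real (1 / c2) \<cdot>\<^sub>v (complex_of_real c1 \<cdot>\<^sub>v x + complex_of_real c2 \<cdot>\<^sub>v (V *\<^sub>v x) - complex_of_real c1 \<cdot>\<^sub>v x))"
    then have r: "r < n" using xc by simp
    have "(complex_of_real (1 / c2) \<cdot>\<^sub>v (complex_of_real c1 \<cdot>\<^sub>v x + complex_of_real c2 \<cdot>\<^sub>v (V *\<^sub>v x) - complex_of_real c1 \<cdot>\<^sub>v x)) $ r
       = complex_of_real (1 / c2) * ((complex_of_real c1 * x $ r + complex_of_real c2 * (V *\<^sub>v x) $ r) - complex_of_real c1 * x $ r)"
      using r xc V by simp
    also have "\<dots> = (V *\<^sub>v x) $ r" using c2 by (simp add: field_simps)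
    finally show "(V *\<^sub>v x) $ r = (complex_of_real (1 / c2) \<cdot>\<^sub>v (complex_of_real c1 \<cdot>\<^sub>v x + complex_of_real c2 \<cdot>\<^sub>v (V *\<^sub>v x) - complex_of_real c1 \<cdot>\<^sub>v x)) $ r" by simp
  qed (use xc V in simp)
  show ?thesis unfolding eq
    by (intro colsp_smult[OF KK_carrier] colsp_minus[OF KK_carrier] Dx x2)
qed

lemma q_KK: assumes c2: "c2 \<noteq> 0" shows "i \<le> k \<Longrightarrow> q i \<in> colsp (KK i)"
proof (induction i rule: less_induct)
  case (less i)
  show ?case
  proof (cases i)
    case 0 then show ?thesis using q0 colsp_zero[OF KK_carrier] by simp
  next
    case (Suc i')
    show ?thesis
    proof (cases i')
      case 0
      have "q 1 = complex_of_real (1 / vnorm b) \<cdot>\<^sub>v col (KK 1) 0" using KK_col[of 0 1] b V by simp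
      then show ?thesis using Suc 0 colsp_smult[OF KK_carrier colsp_col[OF KK_carrier, of 0 1]] by simp
    next
      case (Suc i'')
      have i1: "1 \<le> i'" using Suc by simp
      have h1: "q i' \<in> colsp (KK i')" using less \<open>i = Suc i'\<close> by simp
      have h0: "q (i' - 1) \<in> colsp (KK (i' - 1))" using less \<open>i = Suc i'\<close> by simp
      have a1: "V *\<^sub>v q i' \<in> colsp (KK i)" using V_KK[OF c2 h1] \<open>i = Suc i'\<close> by simp
      have a2: "q i' \<in> colsp (KK i)" using h1 KK_mono[of i' i] \<open>i = Suc i'\<close> by auto
      have a3: "V *\<^sub>v q (i' - 1) \<in> colsp (KK i)" using V_KK[OF c2 h0] KK_mono[of "Suc (i' - 1)" i] \<open>i = Suc i'\<close> by auto
      have "q i = complex_of_real (1 / ua_lsub V b i') \<cdot>\<^sub>v qt i'" using q_Suc[OF i1] \<open>i = Suc i'\<close> by simp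
      also have "\<dots> \<in> colsp (KK i)" unfolding ua_qt_def
        by (intro colsp_smult[OF KK_carrier] colsp_minus[OF KK_carrier] colsp_add[OF KK_carrier] a1 a2 a3)
      finally show ?thesis .
    qed
  qed
qed

lemma W_sub_K: assumes c2: "c2 \<noteq> 0" shows "colsp WW \<subseteq> krylov DD b k"
proof -
  have "colsp WW \<subseteq> colsp (ua_Q V b k)" by (rule colsp_right[OF Q_carrier U_carrier])
  also have "\<dots> \<subseteq> colsp (KK k)"
  proof (rule colsp_sub[OF Q_carrier KK_carrier])
    fix j assume j: "j < k"
    show "col (ua_Q V b k) j \<in> colsp (KK k)" using Q_col[OF j] q_KK[OF c2, of "Suc j"] KK_mono[of "Suc j" k] j by auto
  qed
  finally show ?thesis using krylov_eq by simp
qed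

end



lemma ls_norm: fixes OT :: "complex mat" and g :: "complex vec"
  assumes OT: "OT \<in> carrier_mat (Suc k) k" and z: "\<And>j. j < k \<Longrightarrow> OT $$ (k,j) = 0"
   and g: "g \<in> carrier_vec (Suc k)" and w: "w \<in> carrier_vec k"
  shows "(vnorm (g - OT *\<^sub>v w))^2 = (\<Sum>i<k. (cmod (g$i - (OT *\<^sub>v w)$i))^2) + (cmod (g$k))^2"
proof -
  have "(vnorm (g - OT *\<^sub>v w))^2 = (\<Sum>i<Suc k. (cmod ((g - OT *\<^sub>v w)$i))^2)"
    unfolding vnorm_def using g OT by (simp add: sum_nonneg)
  also have "\<dots> = (\<Sum>i<k. (cmod (g$i - (OT *\<^sub>v w)$i))^2) + (cmod (g$k - (OT *\<^sub>v w)$k))^2"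
    using g OT by simp
  also have "(OT *\<^sub>v w) $ k = 0" using OT w z by (simp add: scalar_prod_def)
  finally show ?thesis by simp
qed

lemma invertible_Units: assumes R: "R \<in> carrier_mat k k" and inv: "invertible_mat R"
  shows "R \<in> Units (ring_mat TYPE('a :: semiring_1) k bb)"
proof -
  obtain B where B: "R * B = 1\<^sub>m (dim_row R)" "B * R = 1\<^sub>m (dim_row B)"
    using inv unfolding invertible_mat_def inverts_mat_def by auto
  have "dim_col B = k" using B(1) R by (metis index_mult_mat(3) index_one_mat(3) carrier_matD(1))
  moreover have "dim_row B = k" using B(2) R by (metis index_mult_mat(3) index_one_mat(3) carrier_matD(2))
  ultimately have Bc: "B \<in> carrier_mat k k" by auto
  show ?thesis unfolding Units_def ring_mat_def using R Bc B by auto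
qed




theorem mainTheorem6:
  fixes n k :: nat and V :: "complex mat" and b :: "complex vec" and c1 c2 :: real
    and z :: "complex vec" and cs :: "nat \<Rightarrow> real" and ss :: "nat \<Rightarrow> complex"
    and Os :: "nat \<Rightarrow> complex mat"
  assumes V: "V \<in> carrier_mat n n" and V_unitary: "unitary_mat V"
    and b: "b \<in> carrier_vec n"
    and k: "1 \<le> k"
    and nobreak: "ua_no_breakdown V b k"
    and LU: "has_nonsingular_LU (complex_of_real c1 \<cdot>\<^sub>m ua_U V b k + complex_of_real c2 \<cdot>\<^sub>m ua_L V b k)"
    and z: "z \<in> carrier_vec k"
    and z_solves: "(complex_of_real c1 \<cdot>\<^sub>m ua_U V b k + complex_of_real c2 \<cdot>\<^sub>m ua_L V b k) *\<^sub>v z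
                   = complex_of_real (vnorm b) \<cdot>\<^sub>v unit_vec k 0"
    and O0: "Os 0 = 1\<^sub>m 1"
    and Orec: "\<And>j. 1 \<le> j \<Longrightarrow> j \<le> k \<Longrightarrow>
                 Os j = givens_mat j (cs j) (ss j) * four_block_mat (Os (j - 1)) (0\<^sub>m j 1) (0\<^sub>m 1 j) (1\<^sub>m 1)"
    and cs_nonneg: "\<And>j. 1 \<le> j \<Longrightarrow> j \<le> k \<Longrightarrow> cs j \<ge> 0"
    and cs_ss: "\<And>j. 1 \<le> j \<Longrightarrow> j \<le> k \<Longrightarrow> (cs j)^2 + (cmod (ss j))^2 = 1"
    and Ok_unitary: "unitary_mat (Os k)"
    and triang_zero: "\<And>j. j < k \<Longrightarrow>
          (Os k * mat (k + 1) k (\<lambda>(i, j). if i < k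
              then (complex_of_real c1 \<cdot>\<^sub>m ua_U V b k + complex_of_real c2 \<cdot>\<^sub>m ua_L V b k) $$ (i, j)
              else if j = k - 1 then complex_of_real (c2 * ua_lsub V b k) else 0)) $$ (k, j) = 0"
    and R_upper: "upper_triangular (mat k k (\<lambda>(i, j). (Os k * mat (k + 1) k (\<lambda>(i, j). if i < k
              then (complex_of_real c1 \<cdot>\<^sub>m ua_U V b k + complex_of_real c2 \<cdot>\<^sub>m ua_L V b k) $$ (i, j)
              else if j = k - 1 then complex_of_real (c2 * ua_lsub V b k) else 0)) $$ (i, j)))"
    and R_nonsing: "invertible_mat (mat k k (\<lambda>(i, j). (Os k * mat (k + 1) k (\<lambda>(i, j). if i < k
              then (complex_of_real c1 \<cdot>\<^sub>m ua_U V b k + complex_of_real c2 \<cdot>\<^sub>m ua_L V b k) $$ (i, j)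
              else if j = k - 1 then complex_of_real (c2 * ua_lsub V b k) else 0)) $$ (i, j)))"
  shows
    "let D = complex_of_real c1 \<cdot>\<^sub>m 1\<^sub>m n + complex_of_real c2 \<cdot>\<^sub>m V;
         T = complex_of_real c1 \<cdot>\<^sub>m ua_U V b k + complex_of_real c2 \<cdot>\<^sub>m ua_L V b k;
         \<nu> = complex_of_real (c2 * ua_lsub V b k);
         Tt = mat (k + 1) k (\<lambda>(i, j). if i < k then T $$ (i, j) else if j = k - 1 then \<nu> else 0);
         R = mat k k (\<lambda>(i, j). (Os k * Tt) $$ (i, j));
         \<alpha> = z $ (k - 1);
         xk = ua_Q V b k *\<^sub>v (ua_U V b k *\<^sub>v z);
         xt = xk - (\<nu> * \<alpha> * ss k) \<cdot>\<^sub>v (ua_Q V b k *\<^sub>v (ua_U V b k *\<^sub>v (the (mat_inverse R) *\<^sub>v unit_vec k (k - 1))))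
     in xt \<in> krylov D b k
        \<and> (\<forall>y \<in> krylov D b k. vnorm (b - D *\<^sub>v xt) \<le> vnorm (b - D *\<^sub>v y))
        \<and> (\<forall>y \<in> krylov D b k. vnorm (b - D *\<^sub>v y) \<le> vnorm (b - D *\<^sub>v xt) \<longrightarrow> y = xt)"
proof -
  have dimV: "dim_row V = n" using V by auto
  have VV: "mat_adjoint V * V = 1\<^sub>m n" using V_unitary dimV unfolding unitary_mat_def by auto
  have bnz: "vnorm b \<noteq> 0" using nobreak unfolding ua_no_breakdown_def by auto
  interpret arnc V b n k c1 c2 by unfold_locales (use V VV b bnz nobreak in auto)
  define \<nu> where "\<nu> = complex_of_real (c2 * ua_lsub V b k)"
  define \<beta> where "\<beta> = complex_of_real (vnorm b)"
  define Ok where "Ok = Os k"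
  define OT where "OT = Ok * Tt"
  define R where "R = mat k k (\<lambda>(i, j). OT $$ (i, j))"
  define g where "g = Ok *\<^sub>v (\<beta> \<cdot>\<^sub>v unit_vec (Suc k) 0)"
  define \<alpha> where "\<alpha> = z $ (k - 1)"
  have Odim: "Os j \<in> carrier_mat (Suc j) (Suc j)" if "j \<le> k" for j
    using that
  proof (induction j)
    case 0 then show ?case using O0 by simp
  next
    case (Suc j)
    have "givens_mat (Suc j) (cs (Suc j)) (ss (Suc j)) \<in> carrier_mat (Suc (Suc j)) (Suc (Suc j))"
      unfolding givens_mat_def by simp
    moreover have "four_block_mat (Os j) (0\<^sub>m (Suc j) 1) (0\<^sub>m 1 (Suc j)) (1\<^sub>m 1) \<in> carrier_mat (Suc (Suc j)) (Suc (Suc j))"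
      using Suc by (metis Suc_eq_plus1 Suc_leD four_block_carrier_mat one_carrier_mat)
    ultimately show ?case using Orec[of "Suc j"] Suc.prems by auto
  qed
  have Oc: "Ok \<in> carrier_mat (Suc k) (Suc k)" unfolding Ok_def using Odim by simp
  have OO: "mat_adjoint Ok * Ok = 1\<^sub>m (Suc k)" using Ok_unitary Oc unfolding unitary_mat_def Ok_def by auto
  have Ocol: "Ok $$ (i, k) = (if i = k - 1 then ss k else if i = k then complex_of_real (cs k) else 0)"
    if i: "i < Suc k" for i
  proof -
    let ?G = "givens_mat k (cs k) (ss k)"
    let ?B = "four_block_mat (Os (k - 1)) (0\<^sub>m k 1) (0\<^sub>m 1 k) (1\<^sub>m 1)"
    have Gc: "?G \<in> carrier_mat (Suc k) (Suc k)" unfolding givens_mat_def by simp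
    have Ok1: "Os (k - 1) \<in> carrier_mat k k" using Odim[of "k - 1"] k by simp
    have Bc: "?B \<in> carrier_mat (Suc k) (Suc k)" using Ok1 by (metis Suc_eq_plus1 four_block_carrier_mat one_carrier_mat)
    have Oeq: "Ok = ?G * ?B" unfolding Ok_def using Orec[of k] k by simp
    have colB: "col ?B k = unit_vec (Suc k) k" using Ok1 by (intro eq_vecI) auto
    have "Ok $$ (i, k) = row ?G i \<bullet> col ?B k" unfolding Oeq by (rule index_mult_mat(1)) (use Gc Bc i in auto)
    also have "\<dots> = ?G $$ (i, k)" unfolding colB using Gc i by simp
    also have "\<dots> = (if i = k - 1 then ss k else if i = k then complex_of_real (cs k) else 0)"
      using i k unfolding givens_mat_def by auto
    finally show ?thesis .
  qed
  have OTc: "OT \<in> carrier_mat (Suc k) k" unfolding OT_def using Oc by simp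
  have OTk: "OT $$ (k, j) = 0" if "j < k" for j
    unfolding OT_def Ok_def using triang_zero[OF that] by simp
  have Rc: "R \<in> carrier_mat k k" unfolding R_def by simp
  have R_OT: "(R *\<^sub>v w) $ i = (OT *\<^sub>v w) $ i" if "w \<in> carrier_vec k" "i < k" for w i
    using that OTc unfolding R_def by (simp add: scalar_prod_def)
  have Rinv: "invertible_mat R" using R_nonsing unfolding R_def OT_def Ok_def by simp
  obtain Ri where Ri: "mat_inverse R = Some Ri"
    using mat_inverse(1)[OF Rc] invertible_Units[OF Rc Rinv] by fastforce
  have RRi: "R * Ri = 1\<^sub>m k" "Ri * R = 1\<^sub>m k" "Ri \<in> carrier_mat k k"
    using mat_inverse(2)[OF Rc Ri] by auto
  have ak: "arnk V b n k" by unfold_locales (use V VV b bnz nobreak in auto)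
  have Ttz: "Tt *\<^sub>v z = \<beta> \<cdot>\<^sub>v unit_vec (Suc k) 0 + (\<nu> * \<alpha>) \<cdot>\<^sub>v unit_vec (Suc k) k"
  proof (intro eq_vecI)
    fix i assume "i < dim_vec (\<beta> \<cdot>\<^sub>v unit_vec (Suc k) 0 + (\<nu> * \<alpha>) \<cdot>\<^sub>v unit_vec (Suc k) k)"
    then have i: "i < Suc k" by simp
    show "(Tt *\<^sub>v z) $ i = (\<beta> \<cdot>\<^sub>v unit_vec (Suc k) 0 + (\<nu> * \<alpha>) \<cdot>\<^sub>v unit_vec (Suc k) k) $ i"
    proof (cases "i < k")
      case True
      have "(Tt *\<^sub>v z) $ i = (TT *\<^sub>v z) $ i" using True z by (simp add: scalar_prod_def)
      also have "\<dots> = (\<beta> \<cdot>\<^sub>v unit_vec k 0) $ i" using z_solves \<beta>_def by simp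
      finally show ?thesis using True by simp
    next
      case False
      then have ik: "i = k" using i by simp
      have "(Tt *\<^sub>v z) $ k = (\<Sum>j\<in>{0..<k}. (if j = k - 1 then \<nu> else 0) * z $ j)"
        using z unfolding \<nu>_def by (simp add: scalar_prod_def)
      also have "\<dots> = (\<Sum>j\<in>{0..<k}. (if j = k - 1 then \<nu> * z $ j else 0))"
        by (rule sum.cong) auto
      also have "\<dots> = \<nu> * \<alpha>" using k unfolding \<alpha>_def by simp
      finally show ?thesis using ik k by simp
    qed
  qed simp
  have Oek: "(Ok *\<^sub>v unit_vec (Suc k) k) $ i = Ok $$ (i, k)" if "i < Suc k" for i
    using that Oc by simp
  have Rz: "R *\<^sub>v z = vec k (\<lambda>i. g $ i) + (\<nu> * \<alpha> * ss k) \<cdot>\<^sub>v unit_vec k (k - 1)"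
  proof (intro eq_vecI)
    fix i assume "i < dim_vec (vec k (\<lambda>i. g $ i) + (\<nu> * \<alpha> * ss k) \<cdot>\<^sub>v unit_vec k (k - 1))"
    then have i: "i < k" by simp
    have "(R *\<^sub>v z) $ i = (OT *\<^sub>v z) $ i" by (rule R_OT[OF z i])
    also have "OT *\<^sub>v z = Ok *\<^sub>v (Tt *\<^sub>v z)" unfolding OT_def using Oc z by (simp add: assoc_mult_mat_vec[of _ "Suc k" "Suc k" _ k])
    also have "\<dots> = g + (\<nu> * \<alpha>) \<cdot>\<^sub>v (Ok *\<^sub>v unit_vec (Suc k) k)"
      unfolding Ttz g_def using Oc by (simp add: mult_add_distrib_mat_vec[OF Oc] mult_mat_vec[OF Oc])
    also have "(g + (\<nu> * \<alpha>) \<cdot>\<^sub>v (Ok *\<^sub>v unit_vec (Suc k) k)) $ i = g $ i + \<nu> * \<alpha> * Ok $$ (i, k)"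
      using i Oc Oek[of i] unfolding g_def by simp
    also have "\<dots> = (vec k (\<lambda>i. g $ i) + (\<nu> * \<alpha> * ss k) \<cdot>\<^sub>v unit_vec k (k - 1)) $ i"
      using i Ocol[of i] by auto
    finally show "(R *\<^sub>v z) $ i = (vec k (\<lambda>i. g $ i) + (\<nu> * \<alpha> * ss k) \<cdot>\<^sub>v unit_vec k (k - 1)) $ i" .
  qed (use Rc in simp)
  define c where "c = \<nu> * \<alpha> * ss k"
  define wst where "wst = z - c \<cdot>\<^sub>v (Ri *\<^sub>v unit_vec k (k - 1))"
  have wc: "wst \<in> carrier_vec k" unfolding wst_def using z RRi by simp
  have Rw: "R *\<^sub>v wst = vec k (\<lambda>i. g $ i)"
  proof -
    have e: "Ri *\<^sub>v unit_vec k (k - 1) \<in> carrier_vec k" using RRi by simp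
    have "R *\<^sub>v wst = R *\<^sub>v z - c \<cdot>\<^sub>v (R *\<^sub>v (Ri *\<^sub>v unit_vec k (k - 1)))"
      unfolding wst_def using z e Rc by (simp add: mult_minus_distrib_mat_vec[OF Rc] mult_mat_vec[OF Rc])
    also have "R *\<^sub>v (Ri *\<^sub>v unit_vec k (k - 1)) = unit_vec k (k - 1)"
      using RRi Rc by (simp add: assoc_mult_mat_vec[symmetric, of _ k k _ k])
    finally show ?thesis unfolding Rz c_def by (intro eq_vecI) auto
  qed
  define F where "F w = (\<Sum>i<k. (cmod (g$i - (R *\<^sub>v w)$i))^2)" for w
  have gc: "g \<in> carrier_vec (Suc k)" unfolding g_def using Oc by simp
  let ?Q = "ua_Q V b (Suc k)"
  have QQ': "mat_adjoint ?Q * ?Q = 1\<^sub>m (Suc k)" using QQ[OF order.refl ak] .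
  have normw: "vnorm (b - DD *\<^sub>v (WW *\<^sub>v w)) = sqrt (F w + (cmod (g$k))^2)" if w: "w \<in> carrier_vec k" for w
  proof -
    have Tw: "Tt *\<^sub>v w \<in> carrier_vec (Suc k)" using w by (intro mult_mat_vec_carrier[OF Tt_carrier])
    have e0: "\<beta> \<cdot>\<^sub>v unit_vec (Suc k) 0 \<in> carrier_vec (Suc k)" by simp
    have "DD *\<^sub>v (WW *\<^sub>v w) = (DD * WW) *\<^sub>v w" using w by (simp add: assoc_mult_mat_vec[of _ n n _ k])
    also have "\<dots> = (?Q * Tt) *\<^sub>v w" using arnoldi by simp
    also have "\<dots> = ?Q *\<^sub>v (Tt *\<^sub>v w)" using w by (simp add: assoc_mult_mat_vec[of _ n "Suc k" _ k])
    finally have A: "DD *\<^sub>v (WW *\<^sub>v w) = ?Q *\<^sub>v (Tt *\<^sub>v w)" .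
    have B: "b = ?Q *\<^sub>v (\<beta> \<cdot>\<^sub>v unit_vec (Suc k) 0)" using b_eq[of k] unfolding \<beta>_def by simp
    have "b - DD *\<^sub>v (WW *\<^sub>v w) = ?Q *\<^sub>v (\<beta> \<cdot>\<^sub>v unit_vec (Suc k) 0 - Tt *\<^sub>v w)"
      unfolding A using B mult_minus_distrib_mat_vec[OF Q_carrier e0 Tw] by simp
    then have "vnorm (b - DD *\<^sub>v (WW *\<^sub>v w)) = vnorm (\<beta> \<cdot>\<^sub>v unit_vec (Suc k) 0 - Tt *\<^sub>v w)"
      using isometry_vnorm[OF Q_carrier QQ'] Tw by simp
    also have "\<dots> = vnorm (Ok *\<^sub>v (\<beta> \<cdot>\<^sub>v unit_vec (Suc k) 0 - Tt *\<^sub>v w))"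
      using isometry_vnorm[OF Oc OO] Tw by simp
    also have "Ok *\<^sub>v (\<beta> \<cdot>\<^sub>v unit_vec (Suc k) 0 - Tt *\<^sub>v w) = g - OT *\<^sub>v w"
      unfolding g_def OT_def using mult_minus_distrib_mat_vec[OF Oc e0 Tw] Oc w
      by (simp add: assoc_mult_mat_vec[of _ "Suc k" "Suc k" _ k])
    finally have C: "vnorm (b - DD *\<^sub>v (WW *\<^sub>v w)) = vnorm (g - OT *\<^sub>v w)" .
    have "(vnorm (g - OT *\<^sub>v w))^2 = (\<Sum>i<k. (cmod (g$i - (OT *\<^sub>v w)$i))^2) + (cmod (g$k))^2"
      by (rule ls_norm[OF OTc OTk gc w])
    also have "(\<Sum>i<k. (cmod (g$i - (OT *\<^sub>v w)$i))^2) = F w"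
      unfolding F_def using R_OT[OF w] by simp
    finally have "(vnorm (g - OT *\<^sub>v w))^2 = F w + (cmod (g$k))^2" .
    then show ?thesis unfolding C using vnorm_nonneg by (metis real_sqrt_unique)
  qed
  have Fnn: "F w \<ge> 0" for w unfolding F_def by (simp add: sum_nonneg)
  have F0: "F wst = 0" unfolding F_def using Rw gc by simp
  have Funiq: "w = wst" if w: "w \<in> carrier_vec k" and Fw: "F w \<le> 0" for w
  proof -
    have "F w = 0" using Fw Fnn[of w] by simp
    then have "\<forall>i\<in>{..<k}. (cmod (g$i - (R *\<^sub>v w)$i))^2 = 0"
      unfolding F_def by (subst sum_nonneg_eq_0_iff[symmetric]) auto
    then have "R *\<^sub>v w = R *\<^sub>v wst" unfolding Rw using Rc by (intro eq_vecI) auto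
    then have "Ri *\<^sub>v (R *\<^sub>v w) = Ri *\<^sub>v (R *\<^sub>v wst)" by simp
    then show ?thesis using RRi Rc w wc by (simp add: assoc_mult_mat_vec[symmetric, of _ k k _ k])
  qed
  define xt where "xt = ua_Q V b k *\<^sub>v (UU *\<^sub>v z) - (\<nu> * \<alpha> * ss k) \<cdot>\<^sub>v (ua_Q V b k *\<^sub>v (UU *\<^sub>v (the (mat_inverse R) *\<^sub>v unit_vec k (k - 1))))"
  have xt_eq: "xt = WW *\<^sub>v wst"
  proof -
    have e: "Ri *\<^sub>v unit_vec k (k - 1) \<in> carrier_vec k" using RRi by simp
    have "WW *\<^sub>v wst = ua_Q V b k *\<^sub>v (UU *\<^sub>v wst)" using wc by (simp add: assoc_mult_mat_vec[of _ n k _ k])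
    also have "UU *\<^sub>v wst = UU *\<^sub>v z - c \<cdot>\<^sub>v (UU *\<^sub>v (Ri *\<^sub>v unit_vec k (k - 1)))"
      unfolding wst_def using z e by (simp add: mult_minus_distrib_mat_vec[OF U_carrier] mult_mat_vec[OF U_carrier])
    also have "ua_Q V b k *\<^sub>v \<dots> = ua_Q V b k *\<^sub>v (UU *\<^sub>v z) - c \<cdot>\<^sub>v (ua_Q V b k *\<^sub>v (UU *\<^sub>v (Ri *\<^sub>v unit_vec k (k - 1))))"
    proof -
      have Uz: "UU *\<^sub>v z \<in> carrier_vec k" using z by (intro mult_mat_vec_carrier[OF U_carrier])
      have Ue: "UU *\<^sub>v (Ri *\<^sub>v unit_vec k (k - 1)) \<in> carrier_vec k" using e by (intro mult_mat_vec_carrier[OF U_carrier])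
      show ?thesis using mult_minus_distrib_mat_vec[OF Q_carrier Uz smult_carrier_vec[THEN iffD2, OF Ue]] mult_mat_vec[OF Q_carrier Ue] by simp
    qed
    finally show ?thesis unfolding xt_def c_def Ri by simp
  qed
  have xtK: "xt \<in> krylov DD b k"
  proof (cases "c2 = 0")
    case False
    have "xt \<in> colsp WW" unfolding xt_eq using wc by (intro colspI) auto
    then show ?thesis using W_sub_K[OF False] by auto
  next
    case True
    have Uz: "UU *\<^sub>v z \<in> carrier_vec k" using z by (intro mult_mat_vec_carrier[OF U_carrier])
    have Tz: "TT *\<^sub>v z = complex_of_real c1 \<cdot>\<^sub>v (UU *\<^sub>v z)"
      using True z by (intro eq_vecI) (auto simp: scalar_prod_def sum_distrib_left algebra_simps)
    have c1: "c1 \<noteq> 0"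
    proof
      assume "c1 = 0"
      then have "(TT *\<^sub>v z) $ 0 = 0" using Tz k by simp
      then show False using z_solves k bnz by simp
    qed
    have UUz: "UU *\<^sub>v z = complex_of_real (vnorm b / c1) \<cdot>\<^sub>v unit_vec k 0"
    proof (intro eq_vecI)
      fix i assume "i < dim_vec (complex_of_real (vnorm b / c1) \<cdot>\<^sub>v unit_vec k 0)"
      then have i: "i < k" by simp
      have "(TT *\<^sub>v z) $ i = (complex_of_real (vnorm b) \<cdot>\<^sub>v unit_vec k 0) $ i" using z_solves by simp
      then have "complex_of_real c1 * (UU *\<^sub>v z) $ i = complex_of_real (vnorm b) * unit_vec k 0 $ i"
        unfolding Tz using i Uz by simp
      then show "(UU *\<^sub>v z) $ i = (complex_of_real (vnorm b / c1) \<cdot>\<^sub>v unit_vec k 0) $ i"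
        using i c1 by (simp add: field_simps)
    qed simp
    have nu0: "\<nu> = 0" unfolding \<nu>_def using True by simp
    have "xt = ua_Q V b k *\<^sub>v (UU *\<^sub>v z)" unfolding xt_def nu0 using Uz by (intro eq_vecI) auto
    also have "\<dots> = complex_of_real (vnorm b / c1) \<cdot>\<^sub>v q 1"
      unfolding UUz using Q_unit[of 0 k] k by (simp add: mult_mat_vec[OF Q_carrier])
    also have "\<dots> = complex_of_real (1 / c1) \<cdot>\<^sub>v col (KK k) 0"
      using KK_col[of 0 k] k b bnz dimV by (intro eq_vecI) auto
    also have "\<dots> \<in> colsp (KK k)" using k by (intro colsp_smult[OF KK_carrier] colsp_col[OF KK_carrier]) auto
    finally show ?thesis using krylov_eq by simp
  qed
  have Wy: "\<exists>w. w \<in> carrier_vec k \<and> y = WW *\<^sub>v w" if "y \<in> krylov DD b k" for y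
    using K_sub_W that by (auto simp: colsp_def)
  have xtn: "vnorm (b - DD *\<^sub>v xt) = sqrt ((cmod (g$k))^2)" unfolding xt_eq normw[OF wc] F0 by simp
  have min: "\<forall>y\<in>krylov DD b k. vnorm (b - DD *\<^sub>v xt) \<le> vnorm (b - DD *\<^sub>v y)"
  proof
    fix y assume "y \<in> krylov DD b k"
    then obtain w where w: "w \<in> carrier_vec k" "y = WW *\<^sub>v w" using Wy by blast
    show "vnorm (b - DD *\<^sub>v xt) \<le> vnorm (b - DD *\<^sub>v y)" unfolding xtn w(2) normw[OF w(1)]
      using Fnn[of w] by (simp add: real_le_rsqrt)
  qed
  have uniq: "\<forall>y\<in>krylov DD b k. vnorm (b - DD *\<^sub>v y) \<le> vnorm (b - DD *\<^sub>v xt) \<longrightarrow> y = xt"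
  proof (intro ballI impI)
    fix y assume "y \<in> krylov DD b k" and le: "vnorm (b - DD *\<^sub>v y) \<le> vnorm (b - DD *\<^sub>v xt)"
    then obtain w where w: "w \<in> carrier_vec k" "y = WW *\<^sub>v w" using Wy by blast
    have "sqrt (F w + (cmod (g$k))^2) \<le> sqrt ((cmod (g$k))^2)" using le unfolding xtn w(2) normw[OF w(1)] .
    then have "F w + (cmod (g$k))^2 \<le> (cmod (g$k))^2" by (simp only: real_sqrt_le_iff)
    then have "F w \<le> 0" by simp
    then show "y = xt" using Funiq[OF w(1)] w(2) xt_eq by simp
  qed
  have final: "xt \<in> krylov DD b k \<and> (\<forall>y\<in>krylov DD b k. vnorm (b - DD *\<^sub>v xt) \<le> vnorm (b - DD *\<^sub>v y))
     \<and> (\<forall>y\<in>krylov DD b k. vnorm (b - DD *\<^sub>v y) \<le> vnorm (b - DD *\<^sub>v xt) \<longrightarrow> y = xt)"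
    using xtK min uniq by blast
  then show ?thesis unfolding Let_def xt_def R_def OT_def Ok_def \<nu>_def \<alpha>_def .
qed



end
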